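(* Let $A\in\mathbf{R}^{n\times n}$, $C_i\in\mathbf{R}^{m_i\times n}$ ($i=1,\ldots,N$), $H\in\mathbf{R}^{p\times n}$ with $(H,A)$ observable, and let $\mathcal{L}$ be the Laplacian of a directed graph on $N$ nodes which has a spanning tree. Set $\bar A=I_N\otimes A$, $\bar C=\mathrm{diag}[C_1,\ldots,C_N]$, $\bar H=\mathcal{L}\otimes H$. If $\bigcap_{i=1}^N\mathcal{C}_i=\{0\}$, where $\mathcal{C}_i$ is the undetectable subspace of $(C_i,A)$, then the pair $\left(\begin{bmatrix}\bar C\\ \bar H\end{bmatrix},\bar A\right)$ is detectable.
   Context: Directed graph on $\{1,\ldots,N\}$ without self-loops; adjacency matrix $\mathbf{A}=[\mathbf{a}_{ij}]$ with $\mathbf{a}_{ij}=1$ if there is an edge from $j$ to $i$, else $0$; $p_i$ the in-degree of node $i$; Laplacian $\mathcal{L}=\mathrm{diag}[p_1,\ldots,p_N]-\mathbf{A}$. A spanning tree is a directed tree containing all nodes, rooted at a node from which every node is reachable by a directed path. For a square matrix $F$ with minimal polynomial $\alpha_F=\alpha_F^-\alpha_F^+$ (zeros of $\alpha_F^-$ in the open left half-plane, of $\alpha_F^+$ in the closed right half-plane), the undetectable subspace of $(G,F)$ is $\bigcap_{l=1}^n\operatorname{Ker}(GF^{l-1})\cap\operatorname{Ker}\alpha_F^+(F)$; the pair is detectable iff this subspace is $\{0\}$. *)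

theory Defs
  imports Complex_Main "HOL-Computational_Algebra.Polynomial" "Jordan_Normal_Form.Matrix_Kernel"
begin

fun poly_mat_list :: "'a::comm_ring_1 list \<Rightarrow> 'a mat \<Rightarrow> 'a mat" where
  "poly_mat_list [] F = 0\<^sub>m (dim_row F) (dim_row F)"
| "poly_mat_list (c # cs) F = c \<cdot>\<^sub>m 1\<^sub>m (dim_row F) + F * poly_mat_list cs F"

definition poly_mat :: "'a::comm_ring_1 poly \<Rightarrow> 'a mat \<Rightarrow> 'a mat" where
  "poly_mat p F = poly_mat_list (coeffs p) F"

definition min_poly :: "'a::field mat \<Rightarrow> 'a poly" where
  "min_poly F = (THE p. lead_coeff p = 1 \<and> poly_mat p F = 0\<^sub>m (dim_row F) (dim_row F) \<and>
      (\<forall>q. lead_coeff q = 1 \<and> poly_mat q F = 0\<^sub>m (dim_row F) (dim_row F) \<longrightarrow> degree p \<le> degree q))"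

text \<open>For a (nonzero) complex polynomial q = q^- q^+, the factor q^+ collecting the zeros
  (with multiplicity) in the closed right half-plane.\<close>
definition rhp_factor :: "complex poly \<Rightarrow> complex poly" where
  "rhp_factor q = (\<Prod>r\<in>{r. poly q r = 0 \<and> 0 \<le> Re r}. [:-r, 1:] ^ order r q)"

definition undetectable_subspace :: "real mat \<Rightarrow> real mat \<Rightarrow> real vec set" where
  "undetectable_subspace G F =
     {x \<in> carrier_vec (dim_col F).
        (\<forall>l\<in>{1..dim_col F}. (G * F ^\<^sub>m (l - 1)) *\<^sub>v x = 0\<^sub>v (dim_row G)) \<and>
        poly_mat (rhp_factor (map_poly complex_of_real (min_poly F))) (map_mat complex_of_real F)
          *\<^sub>v map_vec complex_of_real x = 0\<^sub>v (dim_row F)}"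

definition detectable :: "real mat \<Rightarrow> real mat \<Rightarrow> bool" where
  "detectable G F \<longleftrightarrow> undetectable_subspace G F = {0\<^sub>v (dim_col F)}"

definition observable :: "real mat \<Rightarrow> real mat \<Rightarrow> bool" where
  "observable G F \<longleftrightarrow>
     {x \<in> carrier_vec (dim_col F).
        \<forall>l\<in>{1..dim_col F}. (G * F ^\<^sub>m (l - 1)) *\<^sub>v x = 0\<^sub>v (dim_row G)} = {0\<^sub>v (dim_col F)}"

text \<open>Adjacency matrix of a directed graph on nodes 0..N-1 without self-loops:
  entry (i,j) is 1 iff there is an edge from j to i.\<close>
definition adjacency_matrix :: "nat \<Rightarrow> real mat \<Rightarrow> bool" where
  "adjacency_matrix N Adj \<longleftrightarrow> Adj \<in> carrier_mat N N \<and>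
     (\<forall>i<N. \<forall>j<N. Adj $$ (i,j) = 0 \<or> Adj $$ (i,j) = 1) \<and> (\<forall>i<N. Adj $$ (i,i) = 0)"

definition edges :: "nat \<Rightarrow> real mat \<Rightarrow> (nat \<times> nat) set" where
  "edges N Adj = {(j,i). j < N \<and> i < N \<and> Adj $$ (i,j) = 1}"

definition has_spanning_tree :: "nat \<Rightarrow> real mat \<Rightarrow> bool" where
  "has_spanning_tree N Adj \<longleftrightarrow> (\<exists>T r. r < N \<and> T \<subseteq> edges N Adj \<and> card T = N - 1 \<and>
      (\<forall>i<N. (r,i) \<in> T\<^sup>*))"

definition laplacian :: "nat \<Rightarrow> real mat \<Rightarrow> real mat" where
  "laplacian N Adj = mat N N (\<lambda>(i,j). (if i = j then (\<Sum>k<N. Adj $$ (i,k)) else 0) - Adj $$ (i,j))"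

definition kron :: "'a::times mat \<Rightarrow> 'a mat \<Rightarrow> 'a mat" where
  "kron P Q = mat (dim_row P * dim_row Q) (dim_col P * dim_col Q)
     (\<lambda>(i,j). P $$ (i div dim_row Q, j div dim_col Q) * Q $$ (i mod dim_row Q, j mod dim_col Q))"

text \<open>Block-diagonal matrix diag[C_0,...,C_{N-1}], with C k of size (m k) x n.\<close>
definition row_off :: "(nat \<Rightarrow> nat) \<Rightarrow> nat \<Rightarrow> nat" where
  "row_off m k = (\<Sum>i<k. m i)"

definition block_diag :: "nat \<Rightarrow> (nat \<Rightarrow> nat) \<Rightarrow> nat \<Rightarrow> (nat \<Rightarrow> 'a::zero mat) \<Rightarrow> 'a mat" where
  "block_diag N m n C = mat (row_off m N) (N * n)
     (\<lambda>(i,j). let k = (LEAST k. i < row_off m (Suc k)) in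
        if j div n = k then C k $$ (i - row_off m k, j mod n) else 0)"

definition stack :: "'a mat \<Rightarrow> 'a mat \<Rightarrow> 'a mat" where
  "stack P Q = mat (dim_row P + dim_row Q) (dim_col P)
     (\<lambda>(i,j). if i < dim_row P then P $$ (i,j) else Q $$ (i - dim_row P, j))"

end

theory Submission
  imports Defs
begin


lemma sum_split:
  fixes f :: "nat \<Rightarrow> 'a::comm_monoid_add"
  shows "(\<Sum>k\<in>{0..<N*n}. f k) = (\<Sum>q<N. \<Sum>a<n. f (q*n+a))"
proof (induction N)
  case 0 then show ?case by simp
next
  case (Suc N)
  have "(\<Sum>k\<in>{0..<Suc N*n}. f k) = (\<Sum>k\<in>{0..<N*n}. f k) + (\<Sum>k\<in>{N*n..<N*n+n}. f k)"
    by (simp add: sum.atLeastLessThan_concat add.commute)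
  also have "(\<Sum>k\<in>{N*n..<N*n+n}. f k) = (\<Sum>a<n. f (N*n+a))"
    using sum.shift_bounds_nat_ivl[of f 0 "N*n" n] by (simp add: lessThan_atLeast0 add.commute)
  finally show ?case using Suc by simp
qed

lemma blk_lt: assumes "q < N" "a < (n::nat)" shows "q*n+a < N*n"
proof -
  have "Suc q * n \<le> N * n" using assms(1) by (intro mult_le_mono1) simp
  then show ?thesis using assms(2) by simp
qed
lemma npos: assumes "(i::nat) < N*n" shows "n > 0"
  using assms by (metis gr0I mult_0_right not_less_zero)
lemma iq: assumes "(i::nat) < N*n" shows "i div n < N"
  using less_mult_imp_div_less[OF assms] .
lemma divmod_simps:
  assumes "a < (n::nat)" shows "(q*n+a) div n = q" "(q*n+a) mod n = a"
  using assms by auto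

lemma kron_dim[simp]:
  "dim_row (kron P Q) = dim_row P * dim_row Q" "dim_col (kron P Q) = dim_col P * dim_col Q"
  unfolding kron_def by simp_all

lemma kron_one_idx:
  fixes B :: "'a::comm_ring_1 mat"
  assumes B: "B \<in> carrier_mat n n" and i: "i < N*n" and j: "j < N*n"
  shows "kron (1\<^sub>m N) B $$ (i,j) = (if i div n = j div n then B $$ (i mod n, j mod n) else 0)"
proof -
  have "i div n < N" "j div n < N" using iq i j by auto
  moreover have "i mod n < n" "j mod n < n" using npos[OF i] by auto
  ultimately show ?thesis unfolding kron_def using B i j by simp
qed

lemma kron_one_idx2:
  fixes B :: "'a::comm_ring_1 mat"
  assumes B: "B \<in> carrier_mat n n" and i: "i < N*n" and q: "q < N" and a: "a < n"
  shows "kron (1\<^sub>m N) B $$ (i,q*n+a) = (if i div n = q then B $$ (i mod n, a) else 0)"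
  using kron_one_idx[OF B i blk_lt[OF q a]] unfolding divmod_simps[OF a] .

lemma kron_one_idx3:
  fixes B :: "'a::comm_ring_1 mat"
  assumes B: "B \<in> carrier_mat n n" and j: "j < N*n" and q: "q < N" and a: "a < n"
  shows "kron (1\<^sub>m N) B $$ (q*n+a,j) = (if q = j div n then B $$ (a, j mod n) else 0)"
  using kron_one_idx[OF B blk_lt[OF q a] j] unfolding divmod_simps[OF a] .

lemma kron_one_carrier:
  "B \<in> carrier_mat n n \<Longrightarrow> kron (1\<^sub>m N) B \<in> carrier_mat (N*n) (N*n)"
  unfolding carrier_mat_def by simp

lemma kron_one_mult:
  fixes B B' :: "'a::comm_ring_1 mat"
  assumes B: "B \<in> carrier_mat n n" and B': "B' \<in> carrier_mat n n"
  shows "kron (1\<^sub>m N) B * kron (1\<^sub>m N) B' = kron (1\<^sub>m N) (B*B')"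
proof (rule eq_matI)
  fix i j assume "i < dim_row (kron (1\<^sub>m N) (B*B'))" "j < dim_col (kron (1\<^sub>m N) (B*B'))"
  then have i: "i < N*n" and j: "j < N*n" using B B' by simp_all
  have "(kron (1\<^sub>m N) B * kron (1\<^sub>m N) B') $$ (i,j) =
     (\<Sum>k\<in>{0..<N*n}. kron (1\<^sub>m N) B $$ (i,k) * kron (1\<^sub>m N) B' $$ (k,j))"
    using i j B B' by (simp add: scalar_prod_def)
  also have "\<dots> = (\<Sum>q<N. \<Sum>a<n. kron (1\<^sub>m N) B $$ (i,q*n+a) * kron (1\<^sub>m N) B' $$ (q*n+a,j))"
    by (simp only: sum_split)
  also have "\<dots> = (\<Sum>q<N. if i div n = q then (\<Sum>a<n. B $$ (i mod n, a) * (if q = j div n then B' $$ (a, j mod n) else 0)) else 0)"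
  proof (rule sum.cong[OF refl])
    fix q assume "q \<in> {..<N}"
    then have q: "q < N" by simp
    show "(\<Sum>a<n. kron (1\<^sub>m N) B $$ (i,q*n+a) * kron (1\<^sub>m N) B' $$ (q*n+a,j)) = (if i div n = q then (\<Sum>a<n. B $$ (i mod n, a) * (if q = j div n then B' $$ (a, j mod n) else 0)) else 0)"
    proof -
      have "(\<Sum>a<n. kron (1\<^sub>m N) B $$ (i,q*n+a) * kron (1\<^sub>m N) B' $$ (q*n+a,j)) =
        (\<Sum>a<n. (if i div n = q then B $$ (i mod n, a) else 0) * (if q = j div n then B' $$ (a, j mod n) else 0))"
      proof (rule sum.cong[OF refl])
        fix a assume "a \<in> {..<n}"
        then have a: "a < n" by simp
        show "kron (1\<^sub>m N) B $$ (i,q*n+a) * kron (1\<^sub>m N) B' $$ (q*n+a,j) = (if i div n = q then B $$ (i mod n, a) else 0) * (if q = j div n then B' $$ (a, j mod n) else 0)"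
          unfolding kron_one_idx2[OF B i q a] kron_one_idx3[OF B' j q a] ..
      qed
      then show ?thesis by simp
    qed
  qed
  also have "\<dots> = (\<Sum>a<n. B $$ (i mod n, a) * (if i div n = j div n then B' $$ (a, j mod n) else 0))"
    using iq[OF i] by simp
  also have "\<dots> = kron (1\<^sub>m N) (B*B') $$ (i,j)"
  proof -
    have im: "i mod n < n" and jm: "j mod n < n" using npos[OF i] by auto
    have "(B * B') $$ (i mod n, j mod n) = (\<Sum>a = 0..<n. B $$ (i mod n, a) * B' $$ (a, j mod n))"
      using im jm B B' by (simp add: scalar_prod_def)
    then show ?thesis
      unfolding kron_one_idx[OF mult_carrier_mat[OF B B'] i j] by (simp add: lessThan_atLeast0)
  qed
  finally show "(kron (1\<^sub>m N) B * kron (1\<^sub>m N) B') $$ (i,j) = kron (1\<^sub>m N) (B*B') $$ (i,j)" .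
qed (use B B' in simp_all)

lemma kron_one_add:
  fixes B B' :: "'a::comm_ring_1 mat"
  assumes B: "B \<in> carrier_mat n n" and B': "B' \<in> carrier_mat n n"
  shows "kron (1\<^sub>m N) (B + B') = kron (1\<^sub>m N) B + kron (1\<^sub>m N) B'"
proof (rule eq_matI)
  fix i j assume "i < dim_row (kron (1\<^sub>m N) B + kron (1\<^sub>m N) B')" "j < dim_col (kron (1\<^sub>m N) B + kron (1\<^sub>m N) B')"
  then have i: "i < N*n" and j: "j < N*n" using B B' by simp_all
  have im: "i mod n < n" and jm: "j mod n < n" using npos[OF i] by auto
  show "kron (1\<^sub>m N) (B + B') $$ (i,j) = (kron (1\<^sub>m N) B + kron (1\<^sub>m N) B') $$ (i,j)"
  proof -
    have "(kron (1\<^sub>m N) B + kron (1\<^sub>m N) B') $$ (i,j) = kron (1\<^sub>m N) B $$ (i,j) + kron (1\<^sub>m N) B' $$ (i,j)"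
      using i j B' by simp
    then show ?thesis
      unfolding kron_one_idx[OF add_carrier_mat[OF B'] i j] kron_one_idx[OF B i j] kron_one_idx[OF B' i j]
      using im jm B B' by simp
  qed
qed (use B B' in simp_all)

lemma kron_one_smult:
  fixes c :: "'a::comm_ring_1"
  shows "kron (1\<^sub>m N) (c \<cdot>\<^sub>m 1\<^sub>m n) = c \<cdot>\<^sub>m 1\<^sub>m (N*n)"
proof (rule eq_matI)
  have C: "c \<cdot>\<^sub>m 1\<^sub>m n \<in> carrier_mat n n" by simp
  fix i j assume "i < dim_row (c \<cdot>\<^sub>m 1\<^sub>m (N*n))" "j < dim_col (c \<cdot>\<^sub>m 1\<^sub>m (N*n))"
  then have i: "i < N*n" and j: "j < N*n" by simp_all
  have im: "i mod n < n" and jm: "j mod n < n" using npos[OF i] by auto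
  have "(i = j) = (i div n = j div n \<and> i mod n = j mod n)"
    by (metis div_mult_mod_eq)
  then show "kron (1\<^sub>m N) (c \<cdot>\<^sub>m 1\<^sub>m n) $$ (i,j) = (c \<cdot>\<^sub>m 1\<^sub>m (N*n)) $$ (i,j)"
    unfolding kron_one_idx[OF C i j] using i j im jm by auto
qed simp_all

lemma kron_one_zero:
  shows "kron (1\<^sub>m N) (0\<^sub>m n n :: 'a::comm_ring_1 mat) = 0\<^sub>m (N*n) (N*n)"
proof (rule eq_matI)
  have C: "0\<^sub>m n n \<in> carrier_mat n n" by simp
  fix i j assume "i < dim_row (0\<^sub>m (N*n) (N*n) :: 'a mat)" "j < dim_col (0\<^sub>m (N*n) (N*n) :: 'a mat)"
  then have i: "i < N*n" and j: "j < N*n" by simp_all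
  have im: "i mod n < n" and jm: "j mod n < n" using npos[OF i] by auto
  show "kron (1\<^sub>m N) (0\<^sub>m n n :: 'a mat) $$ (i,j) = 0\<^sub>m (N*n) (N*n) $$ (i,j)"
    unfolding kron_one_idx[OF C i j] using i j im jm by auto
qed simp_all

lemma kron_one_zero_iff:
  fixes M :: "'a::comm_ring_1 mat"
  assumes M: "M \<in> carrier_mat n n" and N: "N > 0"
  shows "kron (1\<^sub>m N) M = 0\<^sub>m (N*n) (N*n) \<longleftrightarrow> M = 0\<^sub>m n n"
proof
  assume z: "kron (1\<^sub>m N) M = 0\<^sub>m (N*n) (N*n)"
  show "M = 0\<^sub>m n n"
  proof (rule eq_matI)
    fix a b assume "a < dim_row (0\<^sub>m n n :: 'a mat)" "b < dim_col (0\<^sub>m n n :: 'a mat)"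
    then have a: "a < n" and b: "b < n" by simp_all
    have "kron (1\<^sub>m N) M $$ (0*n+a, 0*n+b) = (if 0 = (0*n+b) div n then M $$ (a, (0*n+b) mod n) else 0)"
      by (rule kron_one_idx3[OF M blk_lt[OF N b] N a])
    also have "\<dots> = M $$ (a,b)" unfolding divmod_simps[OF b] by simp
    finally have "M $$ (a,b) = kron (1\<^sub>m N) M $$ (0*n+a, 0*n+b)" by simp
    also have "\<dots> = 0" unfolding z using blk_lt[OF N a] blk_lt[OF N b] by simp
    finally show "M $$ (a,b) = 0\<^sub>m n n $$ (a,b)" using a b by simp
  qed (use M in simp_all)
next
  assume "M = 0\<^sub>m n n" then show "kron (1\<^sub>m N) M = 0\<^sub>m (N*n) (N*n)" by (simp add: kron_one_zero)
qed

lemma poly_mat_list_carrier: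
  fixes F :: "'a::comm_ring_1 mat"
  assumes F: "F \<in> carrier_mat n n"
  shows "poly_mat_list cs F \<in> carrier_mat n n"
  using F by (induction cs) auto

lemma poly_mat_list_kron:
  fixes B :: "'a::comm_ring_1 mat"
  assumes B: "B \<in> carrier_mat n n"
  shows "poly_mat_list cs (kron (1\<^sub>m N) B) = kron (1\<^sub>m N) (poly_mat_list cs B)"
proof (induction cs)
  case Nil
  have "dim_row (kron (1\<^sub>m N) B) = N*n" using B by simp
  then show ?case using B by (simp add: kron_one_zero)
next
  case (Cons c cs)
  have d: "dim_row (kron (1\<^sub>m N) B) = N*n" using B by simp
  have P: "poly_mat_list cs B \<in> carrier_mat n n" by (rule poly_mat_list_carrier[OF B])
  have "poly_mat_list (c # cs) (kron (1\<^sub>m N) B) = c \<cdot>\<^sub>m 1\<^sub>m (N*n) + kron (1\<^sub>m N) B * kron (1\<^sub>m N) (poly_mat_list cs B)"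
  proof -
    have dB: "dim_row B = n" using B by simp
    show ?thesis using Cons d dB by simp
  qed
  also have "\<dots> = kron (1\<^sub>m N) (c \<cdot>\<^sub>m 1\<^sub>m n) + kron (1\<^sub>m N) (B * poly_mat_list cs B)"
    unfolding kron_one_smult kron_one_mult[OF B P] ..
  also have "\<dots> = kron (1\<^sub>m N) (c \<cdot>\<^sub>m 1\<^sub>m n + B * poly_mat_list cs B)"
    by (rule kron_one_add[symmetric]) (use B P in auto)
  also have "\<dots> = kron (1\<^sub>m N) (poly_mat_list (c # cs) B)" using B by simp
  finally show ?case .
qed

lemma poly_mat_kron:
  fixes B :: "'a::comm_ring_1 mat"
  assumes B: "B \<in> carrier_mat n n"
  shows "poly_mat p (kron (1\<^sub>m N) B) = kron (1\<^sub>m N) (poly_mat p B)"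
  unfolding poly_mat_def using poly_mat_list_kron[OF B] .

lemma kron_one_pow:
  fixes B :: "'a::comm_ring_1 mat"
  assumes B: "B \<in> carrier_mat n n"
  shows "kron (1\<^sub>m N) B ^\<^sub>m k = kron (1\<^sub>m N) (B ^\<^sub>m k)"
proof (induction k)
  case 0
  have "kron (1\<^sub>m N) (1\<^sub>m n :: 'a mat) = 1\<^sub>m (N*n)"
  proof -
    have o: "(1::'a) \<cdot>\<^sub>m 1\<^sub>m m = (1\<^sub>m m :: 'a mat)" for m by (rule eq_matI) auto
    show ?thesis using kron_one_smult[of N "1::'a" n] unfolding o .
  qed
  then show ?case using B by simp
next
  case (Suc k)
  then show ?case using B by (simp add: kron_one_mult[OF pow_carrier_mat[OF B] B])
qed

lemma map_kron:
  fixes f :: "'a::times \<Rightarrow> 'b::times"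
  assumes "\<And>x y. f (x*y) = f x * f y"
  shows "map_mat f (kron P Q) = kron (map_mat f P) (map_mat f Q)"
proof (rule eq_matI)
  fix i j assume "i < dim_row (kron (map_mat f P) (map_mat f Q))" "j < dim_col (kron (map_mat f P) (map_mat f Q))"
  then have i: "i < dim_row P * dim_row Q" and j: "j < dim_col P * dim_col Q" by simp_all
  have "i div dim_row Q < dim_row P" "j div dim_col Q < dim_col P" using iq[OF i] iq[OF j] by auto
  moreover have "i mod dim_row Q < dim_row Q" "j mod dim_col Q < dim_col Q" using npos[OF i] npos[OF j] by auto
  ultimately show "map_mat f (kron P Q) $$ (i,j) = kron (map_mat f P) (map_mat f Q) $$ (i,j)"
    using i j by (simp add: kron_def assms)
qed simp_all

lemma map_one_mat_real: "map_mat complex_of_real (1\<^sub>m N) = 1\<^sub>m N"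
  by (rule eq_matI) auto

lemma min_poly_kron:
  fixes A :: "'a::field mat"
  assumes A: "A \<in> carrier_mat n n" and N: "N > 0"
  shows "min_poly (kron (1\<^sub>m N) A) = min_poly A"
proof -
  have d: "dim_row (kron (1\<^sub>m N) A) = N*n" "dim_row A = n" using A by simp_all
  have eq: "(poly_mat p (kron (1\<^sub>m N) A) = 0\<^sub>m (dim_row (kron (1\<^sub>m N) A)) (dim_row (kron (1\<^sub>m N) A)))
      = (poly_mat p A = 0\<^sub>m (dim_row A) (dim_row A))" for p
    unfolding d poly_mat_kron[OF A] using kron_one_zero_iff[OF _ N] poly_mat_list_carrier[OF A]
    unfolding poly_mat_def by blast
  show ?thesis unfolding min_poly_def eq ..
qed

definition blk :: "nat \<Rightarrow> 'a vec \<Rightarrow> nat \<Rightarrow> 'a vec" where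
  "blk n x i = vec n (\<lambda>a. x $ (i*n+a))"

lemma blk_carrier[simp]: "blk n x i \<in> carrier_vec n"
  unfolding blk_def by simp

lemma blk_idx[simp]: "a < n \<Longrightarrow> blk n x i $ a = x $ (i*n+a)"
  unfolding blk_def by simp

lemma mv_idx:
  fixes M :: "'a::comm_semiring_0 mat"
  assumes "i < dim_row M" "x \<in> carrier_vec (dim_col M)"
  shows "(M *\<^sub>v x) $ i = (\<Sum>k\<in>{0..<dim_col M}. M $$ (i,k) * x $ k)"
  using assms by (auto simp: scalar_prod_def intro!: sum.cong)

lemma mv_zero:
  fixes M :: "'a::comm_semiring_0 mat"
  shows "M *\<^sub>v 0\<^sub>v (dim_col M) = 0\<^sub>v (dim_row M)"
  by (rule eq_vecI) simp_all

lemma kron_idx_gen: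
  assumes "i < dim_row P" "b < dim_row Q" "q < dim_col P" "a < dim_col Q"
  shows "kron P Q $$ (i * dim_row Q + b, q * dim_col Q + a) = P $$ (i,q) * Q $$ (b,a)"
proof -
  have "i * dim_row Q + b < dim_row P * dim_row Q" using blk_lt assms by (metis mult.commute)
  moreover have "q * dim_col Q + a < dim_col P * dim_col Q" using blk_lt assms by (metis mult.commute)
  ultimately show ?thesis unfolding kron_def using assms divmod_simps by simp
qed

lemma kron_mv:
  fixes P Q :: "'a::comm_ring_1 mat"
  assumes P: "P \<in> carrier_mat N N" and Q: "Q \<in> carrier_mat p n" and x: "x \<in> carrier_vec (N*n)"
    and i: "i < N" and b: "b < p"
  shows "(kron P Q *\<^sub>v x) $ (i*p+b) = (\<Sum>j<N. P $$ (i,j) * (Q *\<^sub>v blk n x j) $ b)"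
proof -
  have ib: "i*p+b < dim_row (kron P Q)" using P Q blk_lt[OF i b] by simp
  have xc: "x \<in> carrier_vec (dim_col (kron P Q))" using P Q x by simp
  have "(kron P Q *\<^sub>v x) $ (i*p+b) = (\<Sum>k\<in>{0..<N*n}. kron P Q $$ (i*p+b,k) * x $ k)"
    using mv_idx[OF ib xc] P Q by simp
  also have "\<dots> = (\<Sum>j<N. \<Sum>a<n. kron P Q $$ (i*p+b,j*n+a) * x $ (j*n+a))"
    by (simp only: sum_split)
  also have "\<dots> = (\<Sum>j<N. \<Sum>a<n. P $$ (i,j) * (Q $$ (b,a) * x $ (j*n+a)))"
  proof (rule sum.cong[OF refl], rule sum.cong[OF refl])
    fix j a assume "j \<in> {..<N}" "a \<in> {..<n}"
    then have j: "j < N" and a: "a < n" by auto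
    show "kron P Q $$ (i*p+b,j*n+a) * x $ (j*n+a) = P $$ (i,j) * (Q $$ (b,a) * x $ (j*n+a))"
      using kron_idx_gen[of i P b Q j a] P Q i b j a by simp
  qed
  also have "\<dots> = (\<Sum>j<N. P $$ (i,j) * (Q *\<^sub>v blk n x j) $ b)"
  proof (rule sum.cong[OF refl])
    fix j assume "j \<in> {..<N}"
    have "(Q *\<^sub>v blk n x j) $ b = (\<Sum>a\<in>{0..<n}. Q $$ (b,a) * blk n x j $ a)"
      using mv_idx[of b Q "blk n x j"] Q b by simp
    also have "\<dots> = (\<Sum>a<n. Q $$ (b,a) * x $ (j*n+a))"
      by (simp add: lessThan_atLeast0)
    finally show "(\<Sum>a<n. P $$ (i,j) * (Q $$ (b,a) * x $ (j*n+a))) = P $$ (i,j) * (Q *\<^sub>v blk n x j) $ b"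
      by (simp add: sum_distrib_left)
  qed
  finally show ?thesis .
qed

lemma kron_one_mv:
  fixes M :: "'a::comm_ring_1 mat"
  assumes M: "M \<in> carrier_mat n n" and x: "x \<in> carrier_vec (N*n)" and i: "i < N"
  shows "blk n (kron (1\<^sub>m N) M *\<^sub>v x) i = M *\<^sub>v blk n x i"
proof (rule eq_vecI)
  fix a assume "a < dim_vec (M *\<^sub>v blk n x i)"
  then have a: "a < n" using M by simp
  have "blk n (kron (1\<^sub>m N) M *\<^sub>v x) i $ a = (kron (1\<^sub>m N) M *\<^sub>v x) $ (i*n+a)" using a by simp
  also have "\<dots> = (\<Sum>j<N. 1\<^sub>m N $$ (i,j) * (M *\<^sub>v blk n x j) $ a)"
    by (rule kron_mv[OF _ M x i a]) simp
  also have "\<dots> = (\<Sum>j<N. if i = j then (M *\<^sub>v blk n x j) $ a else 0)"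
    by (rule sum.cong) (use i in auto)
  also have "\<dots> = (M *\<^sub>v blk n x i) $ a" using i by simp
  finally show "blk n (kron (1\<^sub>m N) M *\<^sub>v x) i $ a = (M *\<^sub>v blk n x i) $ a" .
qed (use M in simp)

lemma row_off_mono: "k \<le> i \<Longrightarrow> row_off m k \<le> row_off m i"
  unfolding row_off_def by (rule sum_mono2) auto

lemma row_off_Suc: "row_off m (Suc i) = row_off m i + m i"
  unfolding row_off_def by simp

lemma block_diag_mv:
  fixes C :: "nat \<Rightarrow> 'a::comm_ring_1 mat"
  assumes C: "\<forall>i<N. C i \<in> carrier_mat (m i) n" and x: "x \<in> carrier_vec (N*n)"
    and i: "i < N" and c: "c < m i"
  shows "(block_diag N m n C *\<^sub>v x) $ (row_off m i + c) = (C i *\<^sub>v blk n x i) $ c"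
proof -
  let ?r = "row_off m i + c"
  have lt: "?r < row_off m (Suc i)" using c by (simp add: row_off_Suc)
  have le: "row_off m (Suc i) \<le> row_off m N" using i by (intro row_off_mono) simp
  have least: "(LEAST k. ?r < row_off m (Suc k)) = i"
  proof (rule Least_equality)
    show "?r < row_off m (Suc i)" by (rule lt)
  next
    fix y assume y: "?r < row_off m (Suc y)"
    show "i \<le> y"
    proof (rule ccontr)
      assume "\<not> i \<le> y"
      then have "row_off m (Suc y) \<le> row_off m i" by (intro row_off_mono) simp
      then show False using y by simp
    qed
  qed
  have rr: "?r < dim_row (block_diag N m n C)" using lt le unfolding block_diag_def by simp
  have dc: "dim_col (block_diag N m n C) = N*n" unfolding block_diag_def by simp
  have xc: "x \<in> carrier_vec (dim_col (block_diag N m n C))" using x dc by simp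
  have Ci: "C i \<in> carrier_mat (m i) n" using C i by simp
  have "(block_diag N m n C *\<^sub>v x) $ ?r = (\<Sum>k\<in>{0..<N*n}. block_diag N m n C $$ (?r,k) * x $ k)"
    using mv_idx[OF rr xc] dc by simp
  also have "\<dots> = (\<Sum>q<N. \<Sum>a<n. block_diag N m n C $$ (?r,q*n+a) * x $ (q*n+a))"
    by (simp only: sum_split)
  also have "\<dots> = (\<Sum>q<N. if q = i then (\<Sum>a<n. C i $$ (c,a) * x $ (q*n+a)) else 0)"
  proof (rule sum.cong[OF refl])
    fix q assume "q \<in> {..<N}"
    then have q: "q < N" by simp
    have "(\<Sum>a<n. block_diag N m n C $$ (?r,q*n+a) * x $ (q*n+a)) = (\<Sum>a<n. (if q = i then C i $$ (c,a) else 0) * x $ (q*n+a))"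
    proof (rule sum.cong[OF refl])
      fix a assume "a \<in> {..<n}"
      then have a: "a < n" by simp
      have qa: "q*n+a < N*n" by (rule blk_lt[OF q a])
      have "block_diag N m n C $$ (?r,q*n+a) = (if (q*n+a) div n = i then C i $$ (?r - row_off m i, (q*n+a) mod n) else 0)"
        unfolding block_diag_def using lt le qa least by (simp add: Let_def)
      also have "\<dots> = (if q = i then C i $$ (c,a) else 0)" unfolding divmod_simps[OF a] by simp
      finally show "block_diag N m n C $$ (?r,q*n+a) * x $ (q*n+a) = (if q = i then C i $$ (c,a) else 0) * x $ (q*n+a)" by simp
    qed
    then show "(\<Sum>a<n. block_diag N m n C $$ (?r,q*n+a) * x $ (q*n+a)) = (if q = i then (\<Sum>a<n. C i $$ (c,a) * x $ (q*n+a)) else 0)"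
      by simp
  qed
  also have "\<dots> = (\<Sum>a<n. C i $$ (c,a) * x $ (i*n+a))" using i by simp
  also have "\<dots> = (C i *\<^sub>v blk n x i) $ c"
    using mv_idx[of c "C i" "blk n x i"] Ci c by (simp add: lessThan_atLeast0)
  finally show ?thesis .
qed

lemma stack_mv1:
  assumes "i < dim_row P"
  shows "(stack P Q *\<^sub>v y) $ i = (P *\<^sub>v y) $ i"
proof -
  have "row (stack P Q) i = row P i"
    by (rule eq_vecI) (use assms in \<open>auto simp: stack_def\<close>)
  then show ?thesis using assms by (simp add: stack_def)
qed

lemma stack_mv2:
  assumes "b < dim_row Q" "dim_col Q = dim_col P"
  shows "(stack P Q *\<^sub>v y) $ (dim_row P + b) = (Q *\<^sub>v y) $ b"
proof -
  have "row (stack P Q) (dim_row P + b) = row Q b"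
    by (rule eq_vecI) (use assms in \<open>auto simp: stack_def\<close>)
  then show ?thesis using assms by (simp add: stack_def)
qed



lemma lap_sum:
  assumes adj: "adjacency_matrix N Adj" and i: "i < N"
  shows "(\<Sum>j<N. laplacian N Adj $$ (i,j) * u j) = (\<Sum>j<N. Adj $$ (i,j) * (u i - u j))"
proof -
  have "(\<Sum>j<N. laplacian N Adj $$ (i,j) * u j) =
        (\<Sum>j<N. (if i = j then (\<Sum>k<N. Adj $$ (i,k)) else 0) * u j - Adj $$ (i,j) * u j)"
  proof (rule sum.cong[OF refl])
    fix j assume "j \<in> {..<N}"
    then have j: "j < N" by simp
    have "laplacian N Adj $$ (i,j) = (if i = j then (\<Sum>k<N. Adj $$ (i,k)) else 0) - Adj $$ (i,j)"
      unfolding laplacian_def using i j by simp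
    then show "laplacian N Adj $$ (i,j) * u j = (if i = j then (\<Sum>k<N. Adj $$ (i,k)) else 0) * u j - Adj $$ (i,j) * u j"
      by (simp add: left_diff_distrib)
  qed
  also have "\<dots> = (\<Sum>k<N. Adj $$ (i,k)) * u i - (\<Sum>j<N. Adj $$ (i,j) * u j)"
  proof -
    have "(\<Sum>j<N. (if i = j then (\<Sum>k<N. Adj $$ (i,k)) else 0) * u j) = (\<Sum>j<N. if i = j then (\<Sum>k<N. Adj $$ (i,k)) * u i else 0)"
      by (rule sum.cong) auto
    also have "\<dots> = (\<Sum>k<N. Adj $$ (i,k)) * u i" using i by simp
    finally show ?thesis by (simp add: sum_subtractf)
  qed
  also have "\<dots> = (\<Sum>j<N. Adj $$ (i,j) * (u i - u j))"
  proof -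
    have "(\<Sum>j<N. Adj $$ (i,j) * (u i - u j)) = (\<Sum>j<N. Adj $$ (i,j) * u i) - (\<Sum>j<N. Adj $$ (i,j) * u j)"
      unfolding right_diff_distrib by (rule sum_subtractf)
    moreover have "(\<Sum>j<N. Adj $$ (i,j) * u i) = (\<Sum>k<N. Adj $$ (i,k)) * u i"
      by (rule sum_distrib_right[symmetric])
    ultimately show ?thesis by simp
  qed
  finally show ?thesis .
qed

lemma lap_max:
  assumes adj: "adjacency_matrix N Adj"
    and ker: "\<forall>i<N. (\<Sum>j<N. laplacian N Adj $$ (i,j) * u j) = 0"
    and r: "r < N" and T: "T \<subseteq> edges N Adj" and reach: "\<forall>i<N. (r,i) \<in> T\<^sup>*"
  shows "\<forall>j<N. u j \<le> u r"
proof -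
  have N: "{..<N} \<noteq> {}" using r by auto
  define M where "M = Max (u ` {..<N})"
  have Mge: "u j \<le> M" if "j < N" for j unfolding M_def using that by (intro Max_ge) auto
  have "M \<in> u ` {..<N}" unfolding M_def using N by (intro Max_in) auto
  then obtain i0 where i0: "i0 < N" "u i0 = M" by auto
  have nonneg: "0 \<le> Adj $$ (i,j)" if "i < N" "j < N" for i j
  proof -
    have "Adj $$ (i,j) = 0 \<or> Adj $$ (i,j) = 1" using adj that unfolding adjacency_matrix_def by blast
    then show ?thesis by auto
  qed
  have propag: "u j = M" if "(j,i) \<in> T" "u i = M" for i j
  proof -
    have e: "j < N" "i < N" "Adj $$ (i,j) = 1" using that(1) T unfolding edges_def by auto
    have "(\<Sum>k<N. Adj $$ (i,k) * (u i - u k)) = 0" using ker e(2) lap_sum[OF adj e(2), of u] by simp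
    moreover have "\<forall>k\<in>{..<N}. 0 \<le> Adj $$ (i,k) * (u i - u k)"
    proof
      fix k assume "k \<in> {..<N}"
      then have k: "k < N" by simp
      have "0 \<le> Adj $$ (i,k)" using nonneg[OF e(2) k] .
      moreover have "0 \<le> u i - u k" using Mge[OF k] that(2) by simp
      ultimately show "0 \<le> Adj $$ (i,k) * (u i - u k)" by (rule mult_nonneg_nonneg)
    qed
    ultimately have "\<forall>k\<in>{..<N}. Adj $$ (i,k) * (u i - u k) = 0"
      by (subst (asm) sum_nonneg_eq_0_iff) simp_all
    then have "Adj $$ (i,j) * (u i - u j) = 0" using e(1) by (simp only: lessThan_iff Ball_def)
    then show ?thesis using e that(2) by simp
  qed
  have "(r,i0) \<in> T\<^sup>*" using reach i0 by auto
  then have "u i0 = M \<longrightarrow> u r = M"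
  proof (induction rule: rtrancl_induct)
    case base then show ?case by simp
  next
    case (step y z)
    then show ?case using propag[of y z] by simp
  qed
  then have "u r = M" using i0 by simp
  then show ?thesis using Mge by auto
qed

lemma lap_const:
  assumes adj: "adjacency_matrix N Adj" and tree: "has_spanning_tree N Adj"
    and ker: "\<forall>i<N. (\<Sum>j<N. laplacian N Adj $$ (i,j) * u j) = 0"
    and i: "i < N" and j: "j < N"
  shows "u i = u j"
proof -
  from tree obtain T r where r: "r < N" and T: "T \<subseteq> edges N Adj" and reach: "\<forall>i<N. (r,i) \<in> T\<^sup>*"
    unfolding has_spanning_tree_def by blast
  have a: "\<forall>j<N. u j \<le> u r" using lap_max[OF adj ker r T reach] .
  have ker': "\<forall>i<N. (\<Sum>j<N. laplacian N Adj $$ (i,j) * (- u j)) = 0"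
    using ker by (simp add: sum_negf)
  have b: "\<forall>j<N. - u j \<le> - u r" using lap_max[OF adj ker' r T reach] .
  have "u i \<le> u r" "- u i \<le> - u r" "u j \<le> u r" "- u j \<le> - u r" using a b i j by auto
  then show ?thesis by linarith
qed



lemma blk_dim[simp]: "dim_vec (blk n x i) = n" by (simp add: blk_def)

lemma lin_comb:
  fixes M :: "real mat"
  assumes M: "M \<in> carrier_mat p n" and v: "\<And>j. v j \<in> carrier_vec n" and b: "b < p"
  shows "(M *\<^sub>v vec n (\<lambda>a. \<Sum>j<N. c j * v j $ a)) $ b = (\<Sum>j<N. c j * (M *\<^sub>v v j) $ b)"
proof -
  have "(M *\<^sub>v vec n (\<lambda>a. \<Sum>j<N. c j * v j $ a)) $ b = (\<Sum>a\<in>{0..<n}. M $$ (b,a) * vec n (\<lambda>a. \<Sum>j<N. c j * v j $ a) $ a)"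
    using mv_idx[of b M] M b by simp
  also have "\<dots> = (\<Sum>a\<in>{0..<n}. \<Sum>j<N. c j * (M $$ (b,a) * v j $ a))"
    by (rule sum.cong) (auto simp: sum_distrib_left algebra_simps)
  also have "\<dots> = (\<Sum>j<N. c j * (\<Sum>a\<in>{0..<n}. M $$ (b,a) * v j $ a))"
    by (subst sum.swap) (simp add: sum_distrib_left)
  also have "\<dots> = (\<Sum>j<N. c j * (M *\<^sub>v v j) $ b)"
  proof (rule sum.cong[OF refl])
    fix j
    show "c j * (\<Sum>a\<in>{0..<n}. M $$ (b,a) * v j $ a) = c j * (M *\<^sub>v v j) $ b"
      using mv_idx[of b M "v j"] M b v[of j] by simp
  qed
  finally show ?thesis .
qed

theorem corollary1:
  fixes n N p :: nat and m :: "nat \<Rightarrow> nat"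
    and A H Adj :: "real mat" and C :: "nat \<Rightarrow> real mat"
  assumes A: "A \<in> carrier_mat n n"
    and C: "\<forall>i<N. C i \<in> carrier_mat (m i) n"
    and H: "H \<in> carrier_mat p n"
    and obs: "observable H A"
    and graph: "adjacency_matrix N Adj"
    and tree: "has_spanning_tree N Adj"
    and undet: "(\<Inter>i\<in>{..<N}. undetectable_subspace (C i) A) = {0\<^sub>v n}"
  shows "detectable (stack (block_diag N m n C) (kron (laplacian N Adj) H))
                    (kron (1\<^sub>m N) A)"
proof -
  let ?BD = "block_diag N m n C"
  let ?Lap = "laplacian N Adj"
  let ?K = "kron ?Lap H"
  let ?G = "stack ?BD ?K"
  let ?F = "kron (1\<^sub>m N) A"
  have Lc: "?Lap \<in> carrier_mat N N" unfolding laplacian_def by simp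
  have BDc: "?BD \<in> carrier_mat (row_off m N) (N*n)" unfolding block_diag_def by simp
  have Kc: "?K \<in> carrier_mat (N*p) (N*n)" using Lc H unfolding carrier_mat_def by simp
  have dG: "dim_row ?G = row_off m N + N*p" "dim_col ?G = N*n"
    using BDc Kc unfolding stack_def by auto
  have Gc: "?G \<in> carrier_mat (row_off m N + N*p) (N*n)" using dG unfolding carrier_mat_def by simp
  have Fc: "?F \<in> carrier_mat (N*n) (N*n)" by (rule kron_one_carrier[OF A])
  have dF: "dim_col ?F = N*n" "dim_row ?F = N*n" using Fc by auto
  define Ac where "Ac = map_mat complex_of_real A"
  have Acc: "Ac \<in> carrier_mat n n" unfolding Ac_def using A by simp
  define q where "q = rhp_factor (map_poly complex_of_real (min_poly A))"
  have mapF: "map_mat complex_of_real ?F = kron (1\<^sub>m N) Ac"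
    unfolding Ac_def by (simp add: map_kron map_one_mat_real)
  have PFc: "poly_mat r (map_mat complex_of_real ?F) \<in> carrier_mat (N*n) (N*n)" for r
    unfolding poly_mat_def by (rule poly_mat_list_carrier) (use Fc in simp)
  show ?thesis unfolding detectable_def
  proof
    show "undetectable_subspace ?G ?F \<subseteq> {0\<^sub>v (dim_col ?F)}"
    proof
      fix x assume xu: "x \<in> undetectable_subspace ?G ?F"
      have xc: "x \<in> carrier_vec (N*n)" using xu unfolding undetectable_subspace_def dF by auto
      have h1: "\<And>l. l \<in> {1..N*n} \<Longrightarrow> (?G * ?F ^\<^sub>m (l-1)) *\<^sub>v x = 0\<^sub>v (dim_row ?G)"
        using xu unfolding undetectable_subspace_def dF by auto
      have h2: "poly_mat (rhp_factor (map_poly complex_of_real (min_poly ?F))) (map_mat complex_of_real ?F) *\<^sub>v map_vec complex_of_real x = 0\<^sub>v (dim_row ?F)"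
        using xu unfolding undetectable_subspace_def by auto
      show "x \<in> {0\<^sub>v (dim_col ?F)}"
      proof (cases "N = 0")
        case True then show ?thesis using xc dF by auto
      next
        case False
        then have N: "N > 0" by simp
        define v where "v j = blk n x j" for j
        have vc: "v j \<in> carrier_vec n" for j unfolding v_def by simp
        have hk: "?BD *\<^sub>v (kron (1\<^sub>m N) (A ^\<^sub>m k) *\<^sub>v x) = 0\<^sub>v (row_off m N) \<and>
                  ?K *\<^sub>v (kron (1\<^sub>m N) (A ^\<^sub>m k) *\<^sub>v x) = 0\<^sub>v (N*p)" if k: "k < N*n" for k
        proof -
          let ?y = "kron (1\<^sub>m N) (A ^\<^sub>m k) *\<^sub>v x"
          have "Suc k \<in> {1..N*n}" using k by simp
          then have "(?G * ?F ^\<^sub>m k) *\<^sub>v x = 0\<^sub>v (dim_row ?G)" using h1[of "Suc k"] by simp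
          moreover have "?F ^\<^sub>m k = kron (1\<^sub>m N) (A ^\<^sub>m k)" by (rule kron_one_pow[OF A])
          moreover have "kron (1\<^sub>m N) (A ^\<^sub>m k) \<in> carrier_mat (N*n) (N*n)"
            by (rule kron_one_carrier[OF pow_carrier_mat[OF A]])
          ultimately have z: "?G *\<^sub>v ?y = 0\<^sub>v (row_off m N + N*p)"
            using Gc xc dG by (simp add: assoc_mult_mat_vec[OF Gc _ xc])
          have "?BD *\<^sub>v ?y = 0\<^sub>v (row_off m N)"
          proof (rule eq_vecI)
            fix i assume "i < dim_vec (0\<^sub>v (row_off m N) :: real vec)"
            then have i: "i < dim_row ?BD" using BDc by simp
            have "(?BD *\<^sub>v ?y) $ i = (?G *\<^sub>v ?y) $ i" using stack_mv1[OF i] by simp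
            also have "\<dots> = 0" using z i BDc by simp
            finally show "(?BD *\<^sub>v ?y) $ i = 0\<^sub>v (row_off m N) $ i" using i BDc by simp
          qed (use BDc in simp)
          moreover have "?K *\<^sub>v ?y = 0\<^sub>v (N*p)"
          proof (rule eq_vecI)
            fix b assume "b < dim_vec (0\<^sub>v (N*p) :: real vec)"
            then have b: "b < dim_row ?K" using Lc H by simp
            have dd: "dim_col ?K = dim_col ?BD" using Lc H BDc by simp
            have "(?K *\<^sub>v ?y) $ b = (?G *\<^sub>v ?y) $ (dim_row ?BD + b)" using stack_mv2[OF b dd] by simp
            also have "\<dots> = 0" using z b BDc Lc H by simp
            finally show "(?K *\<^sub>v ?y) $ b = 0\<^sub>v (N*p) $ b" using b Lc H by simp
          qed (use Lc H in simp)
          ultimately show ?thesis by simp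
        qed
        have blky: "blk n (kron (1\<^sub>m N) (A ^\<^sub>m k) *\<^sub>v x) j = A ^\<^sub>m k *\<^sub>v v j" if "j < N" for k j
          unfolding v_def by (rule kron_one_mv[OF pow_carrier_mat[OF A] xc that])
        define w where "w i = vec n (\<lambda>a. \<Sum>j<N. ?Lap $$ (i,j) * v j $ a)" for i
        have w0: "w i = 0\<^sub>v n" if i: "i < N" for i
        proof -
          have "w i \<in> {x \<in> carrier_vec (dim_col A).
              \<forall>l\<in>{1..dim_col A}. (H * A ^\<^sub>m (l - 1)) *\<^sub>v x = 0\<^sub>v (dim_row H)}"
          proof (intro CollectI conjI ballI)
            show "w i \<in> carrier_vec (dim_col A)" unfolding w_def using A by simp
            fix l assume l: "l \<in> {1..dim_col A}"
            let ?k = "l - 1"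
            have k: "?k < N*n" using l A N
              proof -
              have "1 \<le> l" "l \<le> n" using l A by auto
              moreover have "1 * n \<le> N * n" using N by (intro mult_le_mono1) simp
              ultimately show ?thesis by linarith
            qed
            have HAc: "H * A ^\<^sub>m ?k \<in> carrier_mat p n" using H A by simp
            show "(H * A ^\<^sub>m ?k) *\<^sub>v w i = 0\<^sub>v (dim_row H)"
            proof (rule eq_vecI)
              fix b assume "b < dim_vec (0\<^sub>v (dim_row H) :: real vec)"
              then have b: "b < p" using H by simp
              have "((H * A ^\<^sub>m ?k) *\<^sub>v w i) $ b = (\<Sum>j<N. ?Lap $$ (i,j) * ((H * A ^\<^sub>m ?k) *\<^sub>v v j) $ b)"
                unfolding w_def by (rule lin_comb[OF HAc vc b])
              also have "\<dots> = (\<Sum>j<N. ?Lap $$ (i,j) * (H *\<^sub>v blk n (kron (1\<^sub>m N) (A ^\<^sub>m ?k) *\<^sub>v x) j) $ b)"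
              proof (rule sum.cong[OF refl])
                fix j assume "j \<in> {..<N}"
                then have j: "j < N" by simp
                show "?Lap $$ (i,j) * ((H * A ^\<^sub>m ?k) *\<^sub>v v j) $ b = ?Lap $$ (i,j) * (H *\<^sub>v blk n (kron (1\<^sub>m N) (A ^\<^sub>m ?k) *\<^sub>v x) j) $ b"
                  unfolding blky[OF j] using assoc_mult_mat_vec[OF H pow_carrier_mat[OF A] vc] by simp
              qed
              also have "\<dots> = (?K *\<^sub>v (kron (1\<^sub>m N) (A ^\<^sub>m ?k) *\<^sub>v x)) $ (i*p+b)"
                by (rule kron_mv[symmetric, OF Lc H _ i b]) (rule mult_mat_vec_carrier[OF kron_one_carrier[OF pow_carrier_mat[OF A]] xc])
              also have "\<dots> = 0" using hk[OF k] blk_lt[OF i b] by simp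
              finally show "((H * A ^\<^sub>m ?k) *\<^sub>v w i) $ b = 0\<^sub>v (dim_row H) $ b" using b H by simp
            qed (use H in simp)
          qed
          then show ?thesis using obs A unfolding observable_def by auto
        qed
        have vconst: "v j = v 0" if j: "j < N" for j
        proof (rule eq_vecI)
          fix a assume "a < dim_vec (v 0)"
          then have a: "a < n" using vc[of 0] by simp
          have ker: "\<forall>i<N. (\<Sum>j<N. ?Lap $$ (i,j) * v j $ a) = 0"
          proof (intro allI impI)
            fix i assume i: "i < N"
            have "w i $ a = 0" using w0[OF i] a by simp
            then show "(\<Sum>j<N. ?Lap $$ (i,j) * v j $ a) = 0" unfolding w_def using a by simp
          qed
          show "v j $ a = v 0 $ a"
            by (rule lap_const[OF graph tree, of "\<lambda>j. v j $ a", OF ker j N])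
        qed (use vc[of j] vc[of 0] in simp)
        let ?v = "v 0"
        have vin: "?v \<in> undetectable_subspace (C i) A" if i: "i < N" for i
        proof -
          have Ci: "C i \<in> carrier_mat (m i) n" using C i by simp
          have part1: "(C i * A ^\<^sub>m (l - 1)) *\<^sub>v ?v = 0\<^sub>v (dim_row (C i))" if l: "l \<in> {1..dim_col A}" for l
          proof -
            let ?k = "l - 1"
            let ?y = "kron (1\<^sub>m N) (A ^\<^sub>m ?k) *\<^sub>v x"
            have k: "?k < N*n" using l A N
              proof -
              have "1 \<le> l" "l \<le> n" using l A by auto
              moreover have "1 * n \<le> N * n" using N by (intro mult_le_mono1) simp
              ultimately show ?thesis by linarith
            qed
            have "(C i * A ^\<^sub>m ?k) *\<^sub>v ?v = C i *\<^sub>v blk n ?y i"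
              unfolding blky[OF i] vconst[OF i, symmetric] using assoc_mult_mat_vec[OF Ci pow_carrier_mat[OF A] vc] by simp
            also have "\<dots> = 0\<^sub>v (m i)"
            proof (rule eq_vecI)
              fix c assume "c < dim_vec (0\<^sub>v (m i) :: real vec)"
              then have c: "c < m i" by simp
              have yc: "?y \<in> carrier_vec (N*n)" by (rule mult_mat_vec_carrier[OF kron_one_carrier[OF pow_carrier_mat[OF A]] xc])
              have "(C i *\<^sub>v blk n ?y i) $ c = (?BD *\<^sub>v ?y) $ (row_off m i + c)"
                by (rule block_diag_mv[symmetric, OF C yc i c])
              also have "\<dots> = 0"
              proof -
                have "row_off m i + c < row_off m (Suc i)" using c by (simp add: row_off_Suc)
                also have "\<dots> \<le> row_off m N" using i by (intro row_off_mono) simp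
                finally show ?thesis using hk[OF k] by simp
              qed
              finally show "(C i *\<^sub>v blk n ?y i) $ c = 0\<^sub>v (m i) $ c" using c by simp
            qed (use Ci in simp)
            finally show ?thesis using Ci by simp
          qed
          have part2: "poly_mat q Ac *\<^sub>v map_vec complex_of_real ?v = 0\<^sub>v n"
          proof -
            have Pc: "poly_mat q Ac \<in> carrier_mat n n"
              unfolding poly_mat_def by (rule poly_mat_list_carrier[OF Acc])
            have xC: "map_vec complex_of_real x \<in> carrier_vec (N*n)" using xc by simp
            have "kron (1\<^sub>m N) (poly_mat q Ac) *\<^sub>v map_vec complex_of_real x = 0\<^sub>v (N*n)"
              using h2 unfolding min_poly_kron[OF A N] mapF poly_mat_kron[OF Acc] q_def[symmetric] dF .
            then have "blk n (kron (1\<^sub>m N) (poly_mat q Ac) *\<^sub>v map_vec complex_of_real x) 0 = blk n (0\<^sub>v (N*n)) 0"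
              by simp
            moreover have "blk n (0\<^sub>v (N*n)) 0 = (0\<^sub>v n :: complex vec)"
            proof (rule eq_vecI)
              fix a assume "a < dim_vec (0\<^sub>v n :: complex vec)"
              then have a: "a < n" by simp
              show "blk n (0\<^sub>v (N*n)) 0 $ a = (0\<^sub>v n :: complex vec) $ a"
                using a blk_lt[OF N a] by simp
            qed simp
            moreover have "blk n (map_vec complex_of_real x) 0 = map_vec complex_of_real ?v"
            proof (rule eq_vecI)
              fix a assume "a < dim_vec (map_vec complex_of_real ?v)"
              then have a: "a < n" using vc[of 0] by simp
              show "blk n (map_vec complex_of_real x) 0 $ a = map_vec complex_of_real ?v $ a"
              proof -
                have d: "dim_vec (blk n x 0) = n" by (simp add: blk_def)
                show ?thesis using a blk_lt[OF N a] xc d unfolding v_def by simp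
              qed
            qed (simp add: blk_def v_def)
            ultimately show ?thesis unfolding kron_one_mv[OF Pc xC N] by simp
          qed
          show ?thesis
            unfolding undetectable_subspace_def
            using part1 part2 vc A unfolding q_def Ac_def by simp
        qed
        have "?v \<in> (\<Inter>i\<in>{..<N}. undetectable_subspace (C i) A)" using vin by simp
        then have v0: "?v = 0\<^sub>v n" using undet by simp
        show ?thesis
        proof -
          have "x = 0\<^sub>v (N*n)"
          proof (rule eq_vecI)
            fix k assume "k < dim_vec (0\<^sub>v (N*n) :: real vec)"
            then have k: "k < N*n" by simp
            have kk: "k = (k div n) * n + k mod n" by simp
            have km: "k mod n < n" using npos[OF k] by simp
            have "x $ k = v (k div n) $ (k mod n)" unfolding v_def using km kk by simp
            also have "\<dots> = 0" using vconst[OF iq[OF k]] v0 km by simp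
            finally show "x $ k = 0\<^sub>v (N*n) $ k" using k by simp
          qed (use xc in simp)
          then show ?thesis using A by simp
        qed
      qed
    qed
  next
    show "{0\<^sub>v (dim_col ?F)} \<subseteq> undetectable_subspace ?G ?F"
    proof -
      have "(?G * ?F ^\<^sub>m (l - 1)) *\<^sub>v 0\<^sub>v (N*n) = 0\<^sub>v (dim_row ?G)" for l
      proof -
        have "dim_col (?G * ?F ^\<^sub>m (l - 1)) = N*n" using A by simp
        then show ?thesis using mv_zero[of "?G * ?F ^\<^sub>m (l - 1)"] by simp
      qed
      moreover have "poly_mat r (map_mat complex_of_real ?F) *\<^sub>v map_vec complex_of_real (0\<^sub>v (N*n)) = 0\<^sub>v (N*n)" for r
      proof -
        have z0: "map_vec complex_of_real (0\<^sub>v (N*n)) = 0\<^sub>v (N*n)" by (rule eq_vecI) auto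
        have "dim_col (poly_mat r (map_mat complex_of_real ?F)) = N*n" "dim_row (poly_mat r (map_mat complex_of_real ?F)) = N*n"
          using PFc[of r] by auto
        then show ?thesis unfolding z0 using mv_zero[of "poly_mat r (map_mat complex_of_real ?F)"] by simp
      qed
      ultimately show ?thesis unfolding undetectable_subspace_def dF by simp
    qed
  qed
qed


end
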